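(* There exists a planar graph of girth 4 that does not belong to CBU.
   Context: Let $e_1,\ldots,e_d$ be the standard basis of $\mathbb{R}^d$. For $d\ge 1$, a graph belongs to $d$-CBU if one can assign to each vertex an axis-parallel box (product of $d$ closed intervals of positive length) in $\mathbb{R}^d$ such that the boxes have pairwise disjoint interiors, two distinct vertices are adjacent iff their boxes intersect, and any two intersecting boxes intersect in a $(d-1)$-dimensional box orthogonal to $e_1$. CBU denotes the union of the classes $d$-CBU over all $d\ge 1$. *)

theory Defs
  imports "HOL-Analysis.Analysis"
begin

definition simple_graph :: "'v set \<Rightarrow> ('v \<Rightarrow> 'v \<Rightarrow> bool) \<Rightarrow> bool" where
  "simple_graph V E \<longleftrightarrow> finite V \<and> (\<forall>u v. E u v \<longrightarrow> u \<in> V \<and> v \<in> V)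
     \<and> (\<forall>u v. E u v \<longrightarrow> E v u) \<and> (\<forall>u. \<not> E u u)"

definition has_cycle_len :: "'v set \<Rightarrow> ('v \<Rightarrow> 'v \<Rightarrow> bool) \<Rightarrow> nat \<Rightarrow> bool" where
  "has_cycle_len V E k \<longleftrightarrow> 3 \<le> k \<and> (\<exists>f :: nat \<Rightarrow> 'v. (\<forall>i<k. f i \<in> V) \<and> inj_on f {..<k}
     \<and> (\<forall>i<k. E (f i) (f ((i + 1) mod k))))"

definition girth_is :: "'v set \<Rightarrow> ('v \<Rightarrow> 'v \<Rightarrow> bool) \<Rightarrow> nat \<Rightarrow> bool" where
  "girth_is V E g \<longleftrightarrow> has_cycle_len V E g \<and> (\<forall>k<g. \<not> has_cycle_len V E k)"

definition planar :: "'v set \<Rightarrow> ('v \<Rightarrow> 'v \<Rightarrow> bool) \<Rightarrow> bool" where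
  "planar V E \<longleftrightarrow> (\<exists>(pos :: 'v \<Rightarrow> real \<times> real) (\<gamma> :: 'v \<Rightarrow> 'v \<Rightarrow> real \<Rightarrow> real \<times> real).
     inj_on pos V
     \<and> (\<forall>u v. E u v \<longrightarrow> arc (\<gamma> u v) \<and> pathstart (\<gamma> u v) = pos u \<and> pathfinish (\<gamma> u v) = pos v)
     \<and> (\<forall>u v w. E u v \<and> w \<in> V \<and> pos w \<in> path_image (\<gamma> u v) \<longrightarrow> w = u \<or> w = v)
     \<and> (\<forall>u v x y. E u v \<and> E x y \<and> {u, v} \<noteq> {x, y} \<longrightarrow>
          path_image (\<gamma> u v) \<inter> path_image (\<gamma> x y) \<subseteq> {pos u, pos v} \<inter> {pos x, pos y}))"

section \<open>Boxes in R^d (points as nat \<Rightarrow> real, zero outside coordinates 0..d-1; coordinate 0 is e_1)\<close>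

definition cbox_d :: "nat \<Rightarrow> (nat \<Rightarrow> real) \<Rightarrow> (nat \<Rightarrow> real) \<Rightarrow> (nat \<Rightarrow> real) set" where
  "cbox_d d a b = {x. (\<forall>i<d. a i \<le> x i \<and> x i \<le> b i) \<and> (\<forall>i. d \<le> i \<longrightarrow> x i = 0)}"

definition obox_d :: "nat \<Rightarrow> (nat \<Rightarrow> real) \<Rightarrow> (nat \<Rightarrow> real) \<Rightarrow> (nat \<Rightarrow> real) set" where
  "obox_d d a b = {x. (\<forall>i<d. a i < x i \<and> x i < b i) \<and> (\<forall>i. d \<le> i \<longrightarrow> x i = 0)}"

definition facet_box_e1 :: "nat \<Rightarrow> (nat \<Rightarrow> real) set \<Rightarrow> bool" where
  "facet_box_e1 d S \<longleftrightarrow> (\<exists>a b. a 0 = b 0 \<and> (\<forall>i. 1 \<le> i \<and> i < d \<longrightarrow> a i < b i) \<and> S = cbox_d d a b)"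

definition d_CBU :: "nat \<Rightarrow> 'v set \<Rightarrow> ('v \<Rightarrow> 'v \<Rightarrow> bool) \<Rightarrow> bool" where
  "d_CBU d V E \<longleftrightarrow> (\<exists>(lo :: 'v \<Rightarrow> nat \<Rightarrow> real) hi.
     (\<forall>v\<in>V. \<forall>i<d. lo v i < hi v i)
     \<and> (\<forall>u\<in>V. \<forall>v\<in>V. u \<noteq> v \<longrightarrow> obox_d d (lo u) (hi u) \<inter> obox_d d (lo v) (hi v) = {})
     \<and> (\<forall>u\<in>V. \<forall>v\<in>V. u \<noteq> v \<longrightarrow> (E u v \<longleftrightarrow> cbox_d d (lo u) (hi u) \<inter> cbox_d d (lo v) (hi v) \<noteq> {}))
     \<and> (\<forall>u\<in>V. \<forall>v\<in>V. u \<noteq> v \<and> cbox_d d (lo u) (hi u) \<inter> cbox_d d (lo v) (hi v) \<noteq> {} \<longrightarrow>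
          facet_box_e1 d (cbox_d d (lo u) (hi u) \<inter> cbox_d d (lo v) (hi v))))"

definition CBU :: "'v set \<Rightarrow> ('v \<Rightarrow> 'v \<Rightarrow> bool) \<Rightarrow> bool" where
  "CBU V E \<longleftrightarrow> (\<exists>d\<ge>1. d_CBU d V E)"

end

theory Submission
  imports Defs
begin

definition cr :: "real \<times> real \<Rightarrow> real \<times> real \<Rightarrow> real \<times> real \<Rightarrow> real" where
  "cr a b c = (fst b - fst a) * (snd c - snd a) - (snd b - snd a) * (fst c - fst a)"

lemma seg_comp:
  fixes a b x :: "real \<times> real"
  assumes "x \<in> closed_segment a b"
  obtains u where "0 \<le> u" "u \<le> 1" "fst x = fst a + u * (fst b - fst a)" "snd x = snd a + u * (snd b - snd a)"
proof -
  from assms obtain u where u: "0 \<le> u" "u \<le> 1" "x = (1 - u) *\<^sub>R a + u *\<^sub>R b"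
    unfolding in_segment by blast
  have "fst x = fst a + u * (fst b - fst a)" "snd x = snd a + u * (snd b - snd a)"
    using arg_cong[OF u(3), of fst] arg_cong[OF u(3), of snd] by (simp_all add: algebra_simps)
  then show ?thesis using that[of u] u by blast
qed

lemma cr_on_line:
  assumes "x \<in> closed_segment a b" shows "cr a b x = 0"
proof -
  obtain u where u: "fst x = fst a + u * (fst b - fst a)" "snd x = snd a + u * (snd b - snd a)"
    using seg_comp[OF assms] by metis
  show ?thesis unfolding cr_def u by (simp add: algebra_simps)
qed

lemma cr_comb:
  assumes "x \<in> closed_segment c d"
  obtains s where "0 \<le> s" "s \<le> 1" "cr a b x = (1 - s) * cr a b c + s * cr a b d" "fst x = fst c + s * (fst d - fst c)" "snd x = snd c + s * (snd d - snd c)"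
proof -
  obtain s where s: "0 \<le> s" "s \<le> 1" "fst x = fst c + s * (fst d - fst c)" "snd x = snd c + s * (snd d - snd c)"
    using seg_comp[OF assms] by metis
  have "cr a b x = (1 - s) * cr a b c + s * cr a b d"
    unfolding cr_def s by (simp add: algebra_simps)
  then show ?thesis using that s by blast
qed

lemma seg_disj1:
  assumes "cr a b c * cr a b d > 0"
  shows "closed_segment a b \<inter> closed_segment c d = {}"
proof (rule ccontr)
  assume "closed_segment a b \<inter> closed_segment c d \<noteq> {}"
  then obtain x where x1: "x \<in> closed_segment a b" and x2: "x \<in> closed_segment c d" by blast
  have z: "cr a b x = 0" using cr_on_line[OF x1] .
  obtain s where s: "0 \<le> s" "s \<le> 1" "cr a b x = (1 - s) * cr a b c + s * cr a b d"
    using cr_comb[OF x2] by metis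
  define p where "p = cr a b c"
  define q where "q = cr a b d"
  have pq: "p * q > 0" using assms p_def q_def by simp
  have e: "(1 - s) * p + s * q = 0" using z s p_def q_def by simp
  show False
  proof (cases "p > 0")
    case True
    then have "q > 0" using pq by (simp add: zero_less_mult_iff)
    have "(1 - s) * p \<ge> 0" using True s by simp
    moreover have "s * q \<ge> 0" using \<open>q > 0\<close> s by simp
    ultimately have "(1 - s) * p = 0" "s * q = 0" using e by linarith+
    then show False using True \<open>q > 0\<close> by simp
  next
    case False
    then have "p < 0" "q < 0" using pq by (auto simp: zero_less_mult_iff)
    have "(1 - s) * p \<le> 0" using \<open>p < 0\<close> s by (simp add: mult_nonneg_nonpos)
    moreover have "s * q \<le> 0" using \<open>q < 0\<close> s by (simp add: mult_nonneg_nonpos)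
    ultimately have "(1 - s) * p = 0" "s * q = 0" using e by linarith+
    then show False using \<open>p < 0\<close> \<open>q < 0\<close> by simp
  qed
qed

lemma seg_disj2:
  assumes "cr c d a * cr c d b > 0"
  shows "closed_segment a b \<inter> closed_segment c d = {}"
  using seg_disj1[OF assms] by blast

lemma seg_share:
  assumes "cr a b d \<noteq> 0"
  shows "closed_segment a b \<inter> closed_segment a d \<subseteq> {a}"
proof
  fix x assume "x \<in> closed_segment a b \<inter> closed_segment a d"
  then have x1: "x \<in> closed_segment a b" and x2: "x \<in> closed_segment a d" by auto
  have z: "cr a b x = 0" using cr_on_line[OF x1] .
  obtain s where s: "cr a b x = (1 - s) * cr a b a + s * cr a b d"
     "fst x = fst a + s * (fst d - fst a)" "snd x = snd a + s * (snd d - snd a)"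
    using cr_comb[OF x2] by metis
  have "cr a b a = 0" by (simp add: cr_def)
  then have "s * cr a b d = 0" using z s by simp
  then have "s = 0" using assms by simp
  then have "x = a" using s by (simp add: prod_eq_iff)
  then show "x \<in> {a}" by simp
qed

lemma pt_off:
  assumes "cr a b p \<noteq> 0" shows "p \<notin> closed_segment a b"
  using cr_on_line assms by blast


definition Vg :: "nat set" where "Vg = {..<11}"
definition es :: "(nat \<times> nat) list" where "es = [(0,1), (0,5), (0,9), (1,2), (1,3), (1,10), (2,4), (2,5), (2,7), (3,4), (3,6), (4,9), (5,8), (6,7), (8,10)]"
definition Eg :: "nat \<Rightarrow> nat \<Rightarrow> bool" where "Eg u v \<longleftrightarrow> (u,v) \<in> set es \<or> (v,u) \<in> set es"
definition pos :: "nat \<Rightarrow> real \<times> real" where "pos i = (if i = 0 then ((- 10), (- 12)) else if i = 1 then ((0), (0)) else if i = 2 then ((20), (0)) else if i = 3 then ((0), (20)) else if i = 4 then ((20), (20)) else if i = 5 then ((10), (- 20)) else if i = 6 then ((8), (15)) else if i = 7 then ((14), (8)) else if i = 8 then ((7), (- 10)) else if i = 9 then ((- 10), (30)) else ((3), (- 5)))"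

lemma Vg_eq: "Vg = {0,1,2,3,4,5,6,7,8,9,10}"
  unfolding Vg_def by (simp add: lessThan_nat_numeral lessThan_Suc insert_commute)

lemma es_in_Vg: "(u,v) \<in> set es \<Longrightarrow> u \<in> Vg \<and> v \<in> Vg \<and> u \<noteq> v"
  unfolding es_def Vg_eq by auto

lemma simple: "simple_graph Vg Eg"
  unfolding simple_graph_def Eg_def using es_in_Vg by (auto simp: Vg_def)

lemma tri_aux: "(a,b) \<in> set es \<Longrightarrow> Eg b c \<Longrightarrow> Eg c a \<Longrightarrow> False"
  unfolding es_def by (simp only: list.set insert_iff prod.inject empty_iff) (elim disjE conjE; auto simp: Eg_def es_def)
lemma tri_free: "Eg a b \<Longrightarrow> Eg b c \<Longrightarrow> Eg c a \<Longrightarrow> False"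
  unfolding Eg_def[of a b] using tri_aux[of a b c] tri_aux[of b a c] by (metis Eg_def)

lemma comb: fixes L H :: "nat \<Rightarrow> real" assumes "L 0 < H 0" "L 1 < H 1" "L 2 < H 2" "L 3 < H 3" "L 4 < H 4" "L 5 < H 5" "L 6 < H 6" "L 7 < H 7" "L 8 < H 8" "L 9 < H 9" "L 10 < H 10" and "H 0 = L 1 \<or> H 1 = L 0" "H 0 = L 5 \<or> H 5 = L 0" "H 0 = L 9 \<or> H 9 = L 0" "H 1 = L 2 \<or> H 2 = L 1" "H 1 = L 3 \<or> H 3 = L 1" "H 1 = L 10 \<or> H 10 = L 1" "H 2 = L 4 \<or> H 4 = L 2" "H 2 = L 5 \<or> H 5 = L 2" "H 2 = L 7 \<or> H 7 = L 2" "H 3 = L 4 \<or> H 4 = L 3" "H 3 = L 6 \<or> H 6 = L 3" "H 4 = L 9 \<or> H 9 = L 4" "H 5 = L 8 \<or> H 8 = L 5" "H 6 = L 7 \<or> H 7 = L 6" "H 8 = L 10 \<or> H 10 = L 8" shows False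
  using assms by smt


definition test :: "(nat \<Rightarrow> real \<times> real) \<Rightarrow> nat \<Rightarrow> nat \<Rightarrow> nat \<Rightarrow> nat \<Rightarrow> bool" where
  "test P u v x y \<longleftrightarrow> cr (P u) (P v) (P x) * cr (P u) (P v) (P y) > 0 \<or> cr (P x) (P y) (P u) * cr (P x) (P y) (P v) > 0
     \<or> (u = x \<and> cr (P u) (P v) (P y) \<noteq> 0) \<or> (u = y \<and> cr (P u) (P v) (P x) \<noteq> 0)
     \<or> (v = x \<and> cr (P v) (P u) (P y) \<noteq> 0) \<or> (v = y \<and> cr (P v) (P u) (P x) \<noteq> 0)"

lemma test_ok:
  assumes "test P u v x y"
  shows "closed_segment (P u) (P v) \<inter> closed_segment (P x) (P y) \<subseteq> {P u, P v} \<inter> {P x, P y}"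
proof -
  consider "cr (P u) (P v) (P x) * cr (P u) (P v) (P y) > 0" | "cr (P x) (P y) (P u) * cr (P x) (P y) (P v) > 0"
     | "u = x" "cr (P u) (P v) (P y) \<noteq> 0" | "u = y" "cr (P u) (P v) (P x) \<noteq> 0"
     | "v = x" "cr (P v) (P u) (P y) \<noteq> 0" | "v = y" "cr (P v) (P u) (P x) \<noteq> 0"
    using assms unfolding test_def by blast
  then show ?thesis
  proof cases
    case 1 then show ?thesis using seg_disj1 by blast
  next
    case 2 then show ?thesis using seg_disj2 by blast
  next
    case 3 then show ?thesis using seg_share[of "P u" "P v" "P y"] by auto
  next
    case 4
    have s: "closed_segment (P u) (P v) \<inter> closed_segment (P u) (P x) \<subseteq> {P u}" using seg_share 4(2) by blast
    have "closed_segment (P x) (P y) = closed_segment (P u) (P x)" using 4(1) closed_segment_commute by metis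
    then have "closed_segment (P u) (P v) \<inter> closed_segment (P x) (P y) \<subseteq> {P u}" using s by metis
    then show ?thesis using 4(1) by auto
  next
    case 5
    have s: "closed_segment (P v) (P u) \<inter> closed_segment (P v) (P y) \<subseteq> {P v}" using seg_share 5(2) by blast
    have "closed_segment (P u) (P v) = closed_segment (P v) (P u)" using closed_segment_commute by metis
    moreover have "closed_segment (P x) (P y) = closed_segment (P v) (P y)" using 5(1) by metis
    ultimately have "closed_segment (P u) (P v) \<inter> closed_segment (P x) (P y) \<subseteq> {P v}" using s by metis
    then show ?thesis using 5(1) by auto
  next
    case 6
    have s: "closed_segment (P v) (P u) \<inter> closed_segment (P v) (P x) \<subseteq> {P v}" using seg_share 6(2) by blast
    have "closed_segment (P u) (P v) = closed_segment (P v) (P u)" using closed_segment_commute by metis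
    moreover have "closed_segment (P x) (P y) = closed_segment (P v) (P x)" using 6(1) closed_segment_commute by metis
    ultimately have "closed_segment (P u) (P v) \<inter> closed_segment (P x) (P y) \<subseteq> {P v}" using s by metis
    then show ?thesis using 6(1) by auto
  qed
qed

lemma pos_vals: "pos 0 = (- 10, - 12)" "pos 1 = (0, 0)" "pos 2 = (20, 0)" "pos 3 = (0, 20)" "pos 4 = (20, 20)" "pos 5 = (10, - 20)" "pos 6 = (8, 15)" "pos 7 = (14, 8)" "pos 8 = (7, - 10)" "pos 9 = (- 10, 30)" "pos 10 = (3, - 5)"
  by (simp_all add: pos_def)

lemma t_0_1_0_5: "test pos 0 1 0 5" unfolding test_def cr_def pos_vals by simp
lemma t_0_1_0_9: "test pos 0 1 0 9" unfolding test_def cr_def pos_vals by simp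
lemma t_0_1_1_2: "test pos 0 1 1 2" unfolding test_def cr_def pos_vals by simp
lemma t_0_1_1_3: "test pos 0 1 1 3" unfolding test_def cr_def pos_vals by simp
lemma t_0_1_1_10: "test pos 0 1 1 10" unfolding test_def cr_def pos_vals by simp
lemma t_0_1_2_4: "test pos 0 1 2 4" unfolding test_def cr_def pos_vals by simp
lemma t_0_1_2_5: "test pos 0 1 2 5" unfolding test_def cr_def pos_vals by simp
lemma t_0_1_2_7: "test pos 0 1 2 7" unfolding test_def cr_def pos_vals by simp
lemma t_0_1_3_4: "test pos 0 1 3 4" unfolding test_def cr_def pos_vals by simp
lemma t_0_1_3_6: "test pos 0 1 3 6" unfolding test_def cr_def pos_vals by simp
lemma t_0_1_4_9: "test pos 0 1 4 9" unfolding test_def cr_def pos_vals by simp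
lemma t_0_1_5_8: "test pos 0 1 5 8" unfolding test_def cr_def pos_vals by simp
lemma t_0_1_6_7: "test pos 0 1 6 7" unfolding test_def cr_def pos_vals by simp
lemma t_0_1_8_10: "test pos 0 1 8 10" unfolding test_def cr_def pos_vals by simp
lemma t_0_5_0_1: "test pos 0 5 0 1" unfolding test_def cr_def pos_vals by simp
lemma t_0_5_0_9: "test pos 0 5 0 9" unfolding test_def cr_def pos_vals by simp
lemma t_0_5_1_2: "test pos 0 5 1 2" unfolding test_def cr_def pos_vals by simp
lemma t_0_5_1_3: "test pos 0 5 1 3" unfolding test_def cr_def pos_vals by simp
lemma t_0_5_1_10: "test pos 0 5 1 10" unfolding test_def cr_def pos_vals by simp
lemma t_0_5_2_4: "test pos 0 5 2 4" unfolding test_def cr_def pos_vals by simp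
lemma t_0_5_2_5: "test pos 0 5 2 5" unfolding test_def cr_def pos_vals by simp
lemma t_0_5_2_7: "test pos 0 5 2 7" unfolding test_def cr_def pos_vals by simp
lemma t_0_5_3_4: "test pos 0 5 3 4" unfolding test_def cr_def pos_vals by simp
lemma t_0_5_3_6: "test pos 0 5 3 6" unfolding test_def cr_def pos_vals by simp
lemma t_0_5_4_9: "test pos 0 5 4 9" unfolding test_def cr_def pos_vals by simp
lemma t_0_5_5_8: "test pos 0 5 5 8" unfolding test_def cr_def pos_vals by simp
lemma t_0_5_6_7: "test pos 0 5 6 7" unfolding test_def cr_def pos_vals by simp
lemma t_0_5_8_10: "test pos 0 5 8 10" unfolding test_def cr_def pos_vals by simp
lemma t_0_9_0_1: "test pos 0 9 0 1" unfolding test_def cr_def pos_vals by simp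
lemma t_0_9_0_5: "test pos 0 9 0 5" unfolding test_def cr_def pos_vals by simp
lemma t_0_9_1_2: "test pos 0 9 1 2" unfolding test_def cr_def pos_vals by simp
lemma t_0_9_1_3: "test pos 0 9 1 3" unfolding test_def cr_def pos_vals by simp
lemma t_0_9_1_10: "test pos 0 9 1 10" unfolding test_def cr_def pos_vals by simp
lemma t_0_9_2_4: "test pos 0 9 2 4" unfolding test_def cr_def pos_vals by simp
lemma t_0_9_2_5: "test pos 0 9 2 5" unfolding test_def cr_def pos_vals by simp
lemma t_0_9_2_7: "test pos 0 9 2 7" unfolding test_def cr_def pos_vals by simp
lemma t_0_9_3_4: "test pos 0 9 3 4" unfolding test_def cr_def pos_vals by simp
lemma t_0_9_3_6: "test pos 0 9 3 6" unfolding test_def cr_def pos_vals by simp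
lemma t_0_9_4_9: "test pos 0 9 4 9" unfolding test_def cr_def pos_vals by simp
lemma t_0_9_5_8: "test pos 0 9 5 8" unfolding test_def cr_def pos_vals by simp
lemma t_0_9_6_7: "test pos 0 9 6 7" unfolding test_def cr_def pos_vals by simp
lemma t_0_9_8_10: "test pos 0 9 8 10" unfolding test_def cr_def pos_vals by simp
lemma t_1_2_0_1: "test pos 1 2 0 1" unfolding test_def cr_def pos_vals by simp
lemma t_1_2_0_5: "test pos 1 2 0 5" unfolding test_def cr_def pos_vals by simp
lemma t_1_2_0_9: "test pos 1 2 0 9" unfolding test_def cr_def pos_vals by simp
lemma t_1_2_1_3: "test pos 1 2 1 3" unfolding test_def cr_def pos_vals by simp
lemma t_1_2_1_10: "test pos 1 2 1 10" unfolding test_def cr_def pos_vals by simp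
lemma t_1_2_2_4: "test pos 1 2 2 4" unfolding test_def cr_def pos_vals by simp
lemma t_1_2_2_5: "test pos 1 2 2 5" unfolding test_def cr_def pos_vals by simp
lemma t_1_2_2_7: "test pos 1 2 2 7" unfolding test_def cr_def pos_vals by simp
lemma t_1_2_3_4: "test pos 1 2 3 4" unfolding test_def cr_def pos_vals by simp
lemma t_1_2_3_6: "test pos 1 2 3 6" unfolding test_def cr_def pos_vals by simp
lemma t_1_2_4_9: "test pos 1 2 4 9" unfolding test_def cr_def pos_vals by simp
lemma t_1_2_5_8: "test pos 1 2 5 8" unfolding test_def cr_def pos_vals by simp
lemma t_1_2_6_7: "test pos 1 2 6 7" unfolding test_def cr_def pos_vals by simp
lemma t_1_2_8_10: "test pos 1 2 8 10" unfolding test_def cr_def pos_vals by simp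
lemma t_1_3_0_1: "test pos 1 3 0 1" unfolding test_def cr_def pos_vals by simp
lemma t_1_3_0_5: "test pos 1 3 0 5" unfolding test_def cr_def pos_vals by simp
lemma t_1_3_0_9: "test pos 1 3 0 9" unfolding test_def cr_def pos_vals by simp
lemma t_1_3_1_2: "test pos 1 3 1 2" unfolding test_def cr_def pos_vals by simp
lemma t_1_3_1_10: "test pos 1 3 1 10" unfolding test_def cr_def pos_vals by simp
lemma t_1_3_2_4: "test pos 1 3 2 4" unfolding test_def cr_def pos_vals by simp
lemma t_1_3_2_5: "test pos 1 3 2 5" unfolding test_def cr_def pos_vals by simp
lemma t_1_3_2_7: "test pos 1 3 2 7" unfolding test_def cr_def pos_vals by simp
lemma t_1_3_3_4: "test pos 1 3 3 4" unfolding test_def cr_def pos_vals by simp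
lemma t_1_3_3_6: "test pos 1 3 3 6" unfolding test_def cr_def pos_vals by simp
lemma t_1_3_4_9: "test pos 1 3 4 9" unfolding test_def cr_def pos_vals by simp
lemma t_1_3_5_8: "test pos 1 3 5 8" unfolding test_def cr_def pos_vals by simp
lemma t_1_3_6_7: "test pos 1 3 6 7" unfolding test_def cr_def pos_vals by simp
lemma t_1_3_8_10: "test pos 1 3 8 10" unfolding test_def cr_def pos_vals by simp
lemma t_1_10_0_1: "test pos 1 10 0 1" unfolding test_def cr_def pos_vals by simp
lemma t_1_10_0_5: "test pos 1 10 0 5" unfolding test_def cr_def pos_vals by simp
lemma t_1_10_0_9: "test pos 1 10 0 9" unfolding test_def cr_def pos_vals by simp
lemma t_1_10_1_2: "test pos 1 10 1 2" unfolding test_def cr_def pos_vals by simp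
lemma t_1_10_1_3: "test pos 1 10 1 3" unfolding test_def cr_def pos_vals by simp
lemma t_1_10_2_4: "test pos 1 10 2 4" unfolding test_def cr_def pos_vals by simp
lemma t_1_10_2_5: "test pos 1 10 2 5" unfolding test_def cr_def pos_vals by simp
lemma t_1_10_2_7: "test pos 1 10 2 7" unfolding test_def cr_def pos_vals by simp
lemma t_1_10_3_4: "test pos 1 10 3 4" unfolding test_def cr_def pos_vals by simp
lemma t_1_10_3_6: "test pos 1 10 3 6" unfolding test_def cr_def pos_vals by simp
lemma t_1_10_4_9: "test pos 1 10 4 9" unfolding test_def cr_def pos_vals by simp
lemma t_1_10_5_8: "test pos 1 10 5 8" unfolding test_def cr_def pos_vals by simp
lemma t_1_10_6_7: "test pos 1 10 6 7" unfolding test_def cr_def pos_vals by simp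
lemma t_1_10_8_10: "test pos 1 10 8 10" unfolding test_def cr_def pos_vals by simp
lemma t_2_4_0_1: "test pos 2 4 0 1" unfolding test_def cr_def pos_vals by simp
lemma t_2_4_0_5: "test pos 2 4 0 5" unfolding test_def cr_def pos_vals by simp
lemma t_2_4_0_9: "test pos 2 4 0 9" unfolding test_def cr_def pos_vals by simp
lemma t_2_4_1_2: "test pos 2 4 1 2" unfolding test_def cr_def pos_vals by simp
lemma t_2_4_1_3: "test pos 2 4 1 3" unfolding test_def cr_def pos_vals by simp
lemma t_2_4_1_10: "test pos 2 4 1 10" unfolding test_def cr_def pos_vals by simp
lemma t_2_4_2_5: "test pos 2 4 2 5" unfolding test_def cr_def pos_vals by simp
lemma t_2_4_2_7: "test pos 2 4 2 7" unfolding test_def cr_def pos_vals by simp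
lemma t_2_4_3_4: "test pos 2 4 3 4" unfolding test_def cr_def pos_vals by simp
lemma t_2_4_3_6: "test pos 2 4 3 6" unfolding test_def cr_def pos_vals by simp
lemma t_2_4_4_9: "test pos 2 4 4 9" unfolding test_def cr_def pos_vals by simp
lemma t_2_4_5_8: "test pos 2 4 5 8" unfolding test_def cr_def pos_vals by simp
lemma t_2_4_6_7: "test pos 2 4 6 7" unfolding test_def cr_def pos_vals by simp
lemma t_2_4_8_10: "test pos 2 4 8 10" unfolding test_def cr_def pos_vals by simp
lemma t_2_5_0_1: "test pos 2 5 0 1" unfolding test_def cr_def pos_vals by simp
lemma t_2_5_0_5: "test pos 2 5 0 5" unfolding test_def cr_def pos_vals by simp
lemma t_2_5_0_9: "test pos 2 5 0 9" unfolding test_def cr_def pos_vals by simp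
lemma t_2_5_1_2: "test pos 2 5 1 2" unfolding test_def cr_def pos_vals by simp
lemma t_2_5_1_3: "test pos 2 5 1 3" unfolding test_def cr_def pos_vals by simp
lemma t_2_5_1_10: "test pos 2 5 1 10" unfolding test_def cr_def pos_vals by simp
lemma t_2_5_2_4: "test pos 2 5 2 4" unfolding test_def cr_def pos_vals by simp
lemma t_2_5_2_7: "test pos 2 5 2 7" unfolding test_def cr_def pos_vals by simp
lemma t_2_5_3_4: "test pos 2 5 3 4" unfolding test_def cr_def pos_vals by simp
lemma t_2_5_3_6: "test pos 2 5 3 6" unfolding test_def cr_def pos_vals by simp
lemma t_2_5_4_9: "test pos 2 5 4 9" unfolding test_def cr_def pos_vals by simp
lemma t_2_5_5_8: "test pos 2 5 5 8" unfolding test_def cr_def pos_vals by simp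
lemma t_2_5_6_7: "test pos 2 5 6 7" unfolding test_def cr_def pos_vals by simp
lemma t_2_5_8_10: "test pos 2 5 8 10" unfolding test_def cr_def pos_vals by simp
lemma t_2_7_0_1: "test pos 2 7 0 1" unfolding test_def cr_def pos_vals by simp
lemma t_2_7_0_5: "test pos 2 7 0 5" unfolding test_def cr_def pos_vals by simp
lemma t_2_7_0_9: "test pos 2 7 0 9" unfolding test_def cr_def pos_vals by simp
lemma t_2_7_1_2: "test pos 2 7 1 2" unfolding test_def cr_def pos_vals by simp
lemma t_2_7_1_3: "test pos 2 7 1 3" unfolding test_def cr_def pos_vals by simp
lemma t_2_7_1_10: "test pos 2 7 1 10" unfolding test_def cr_def pos_vals by simp
lemma t_2_7_2_4: "test pos 2 7 2 4" unfolding test_def cr_def pos_vals by simp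
lemma t_2_7_2_5: "test pos 2 7 2 5" unfolding test_def cr_def pos_vals by simp
lemma t_2_7_3_4: "test pos 2 7 3 4" unfolding test_def cr_def pos_vals by simp
lemma t_2_7_3_6: "test pos 2 7 3 6" unfolding test_def cr_def pos_vals by simp
lemma t_2_7_4_9: "test pos 2 7 4 9" unfolding test_def cr_def pos_vals by simp
lemma t_2_7_5_8: "test pos 2 7 5 8" unfolding test_def cr_def pos_vals by simp
lemma t_2_7_6_7: "test pos 2 7 6 7" unfolding test_def cr_def pos_vals by simp
lemma t_2_7_8_10: "test pos 2 7 8 10" unfolding test_def cr_def pos_vals by simp
lemma t_3_4_0_1: "test pos 3 4 0 1" unfolding test_def cr_def pos_vals by simp
lemma t_3_4_0_5: "test pos 3 4 0 5" unfolding test_def cr_def pos_vals by simp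
lemma t_3_4_0_9: "test pos 3 4 0 9" unfolding test_def cr_def pos_vals by simp
lemma t_3_4_1_2: "test pos 3 4 1 2" unfolding test_def cr_def pos_vals by simp
lemma t_3_4_1_3: "test pos 3 4 1 3" unfolding test_def cr_def pos_vals by simp
lemma t_3_4_1_10: "test pos 3 4 1 10" unfolding test_def cr_def pos_vals by simp
lemma t_3_4_2_4: "test pos 3 4 2 4" unfolding test_def cr_def pos_vals by simp
lemma t_3_4_2_5: "test pos 3 4 2 5" unfolding test_def cr_def pos_vals by simp
lemma t_3_4_2_7: "test pos 3 4 2 7" unfolding test_def cr_def pos_vals by simp
lemma t_3_4_3_6: "test pos 3 4 3 6" unfolding test_def cr_def pos_vals by simp
lemma t_3_4_4_9: "test pos 3 4 4 9" unfolding test_def cr_def pos_vals by simp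
lemma t_3_4_5_8: "test pos 3 4 5 8" unfolding test_def cr_def pos_vals by simp
lemma t_3_4_6_7: "test pos 3 4 6 7" unfolding test_def cr_def pos_vals by simp
lemma t_3_4_8_10: "test pos 3 4 8 10" unfolding test_def cr_def pos_vals by simp
lemma t_3_6_0_1: "test pos 3 6 0 1" unfolding test_def cr_def pos_vals by simp
lemma t_3_6_0_5: "test pos 3 6 0 5" unfolding test_def cr_def pos_vals by simp
lemma t_3_6_0_9: "test pos 3 6 0 9" unfolding test_def cr_def pos_vals by simp
lemma t_3_6_1_2: "test pos 3 6 1 2" unfolding test_def cr_def pos_vals by simp
lemma t_3_6_1_3: "test pos 3 6 1 3" unfolding test_def cr_def pos_vals by simp
lemma t_3_6_1_10: "test pos 3 6 1 10" unfolding test_def cr_def pos_vals by simp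
lemma t_3_6_2_4: "test pos 3 6 2 4" unfolding test_def cr_def pos_vals by simp
lemma t_3_6_2_5: "test pos 3 6 2 5" unfolding test_def cr_def pos_vals by simp
lemma t_3_6_2_7: "test pos 3 6 2 7" unfolding test_def cr_def pos_vals by simp
lemma t_3_6_3_4: "test pos 3 6 3 4" unfolding test_def cr_def pos_vals by simp
lemma t_3_6_4_9: "test pos 3 6 4 9" unfolding test_def cr_def pos_vals by simp
lemma t_3_6_5_8: "test pos 3 6 5 8" unfolding test_def cr_def pos_vals by simp
lemma t_3_6_6_7: "test pos 3 6 6 7" unfolding test_def cr_def pos_vals by simp
lemma t_3_6_8_10: "test pos 3 6 8 10" unfolding test_def cr_def pos_vals by simp
lemma t_4_9_0_1: "test pos 4 9 0 1" unfolding test_def cr_def pos_vals by simp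
lemma t_4_9_0_5: "test pos 4 9 0 5" unfolding test_def cr_def pos_vals by simp
lemma t_4_9_0_9: "test pos 4 9 0 9" unfolding test_def cr_def pos_vals by simp
lemma t_4_9_1_2: "test pos 4 9 1 2" unfolding test_def cr_def pos_vals by simp
lemma t_4_9_1_3: "test pos 4 9 1 3" unfolding test_def cr_def pos_vals by simp
lemma t_4_9_1_10: "test pos 4 9 1 10" unfolding test_def cr_def pos_vals by simp
lemma t_4_9_2_4: "test pos 4 9 2 4" unfolding test_def cr_def pos_vals by simp
lemma t_4_9_2_5: "test pos 4 9 2 5" unfolding test_def cr_def pos_vals by simp
lemma t_4_9_2_7: "test pos 4 9 2 7" unfolding test_def cr_def pos_vals by simp
lemma t_4_9_3_4: "test pos 4 9 3 4" unfolding test_def cr_def pos_vals by simp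
lemma t_4_9_3_6: "test pos 4 9 3 6" unfolding test_def cr_def pos_vals by simp
lemma t_4_9_5_8: "test pos 4 9 5 8" unfolding test_def cr_def pos_vals by simp
lemma t_4_9_6_7: "test pos 4 9 6 7" unfolding test_def cr_def pos_vals by simp
lemma t_4_9_8_10: "test pos 4 9 8 10" unfolding test_def cr_def pos_vals by simp
lemma t_5_8_0_1: "test pos 5 8 0 1" unfolding test_def cr_def pos_vals by simp
lemma t_5_8_0_5: "test pos 5 8 0 5" unfolding test_def cr_def pos_vals by simp
lemma t_5_8_0_9: "test pos 5 8 0 9" unfolding test_def cr_def pos_vals by simp
lemma t_5_8_1_2: "test pos 5 8 1 2" unfolding test_def cr_def pos_vals by simp
lemma t_5_8_1_3: "test pos 5 8 1 3" unfolding test_def cr_def pos_vals by simp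
lemma t_5_8_1_10: "test pos 5 8 1 10" unfolding test_def cr_def pos_vals by simp
lemma t_5_8_2_4: "test pos 5 8 2 4" unfolding test_def cr_def pos_vals by simp
lemma t_5_8_2_5: "test pos 5 8 2 5" unfolding test_def cr_def pos_vals by simp
lemma t_5_8_2_7: "test pos 5 8 2 7" unfolding test_def cr_def pos_vals by simp
lemma t_5_8_3_4: "test pos 5 8 3 4" unfolding test_def cr_def pos_vals by simp
lemma t_5_8_3_6: "test pos 5 8 3 6" unfolding test_def cr_def pos_vals by simp
lemma t_5_8_4_9: "test pos 5 8 4 9" unfolding test_def cr_def pos_vals by simp
lemma t_5_8_6_7: "test pos 5 8 6 7" unfolding test_def cr_def pos_vals by simp
lemma t_5_8_8_10: "test pos 5 8 8 10" unfolding test_def cr_def pos_vals by simp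
lemma t_6_7_0_1: "test pos 6 7 0 1" unfolding test_def cr_def pos_vals by simp
lemma t_6_7_0_5: "test pos 6 7 0 5" unfolding test_def cr_def pos_vals by simp
lemma t_6_7_0_9: "test pos 6 7 0 9" unfolding test_def cr_def pos_vals by simp
lemma t_6_7_1_2: "test pos 6 7 1 2" unfolding test_def cr_def pos_vals by simp
lemma t_6_7_1_3: "test pos 6 7 1 3" unfolding test_def cr_def pos_vals by simp
lemma t_6_7_1_10: "test pos 6 7 1 10" unfolding test_def cr_def pos_vals by simp
lemma t_6_7_2_4: "test pos 6 7 2 4" unfolding test_def cr_def pos_vals by simp
lemma t_6_7_2_5: "test pos 6 7 2 5" unfolding test_def cr_def pos_vals by simp
lemma t_6_7_2_7: "test pos 6 7 2 7" unfolding test_def cr_def pos_vals by simp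
lemma t_6_7_3_4: "test pos 6 7 3 4" unfolding test_def cr_def pos_vals by simp
lemma t_6_7_3_6: "test pos 6 7 3 6" unfolding test_def cr_def pos_vals by simp
lemma t_6_7_4_9: "test pos 6 7 4 9" unfolding test_def cr_def pos_vals by simp
lemma t_6_7_5_8: "test pos 6 7 5 8" unfolding test_def cr_def pos_vals by simp
lemma t_6_7_8_10: "test pos 6 7 8 10" unfolding test_def cr_def pos_vals by simp
lemma t_8_10_0_1: "test pos 8 10 0 1" unfolding test_def cr_def pos_vals by simp
lemma t_8_10_0_5: "test pos 8 10 0 5" unfolding test_def cr_def pos_vals by simp
lemma t_8_10_0_9: "test pos 8 10 0 9" unfolding test_def cr_def pos_vals by simp
lemma t_8_10_1_2: "test pos 8 10 1 2" unfolding test_def cr_def pos_vals by simp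
lemma t_8_10_1_3: "test pos 8 10 1 3" unfolding test_def cr_def pos_vals by simp
lemma t_8_10_1_10: "test pos 8 10 1 10" unfolding test_def cr_def pos_vals by simp
lemma t_8_10_2_4: "test pos 8 10 2 4" unfolding test_def cr_def pos_vals by simp
lemma t_8_10_2_5: "test pos 8 10 2 5" unfolding test_def cr_def pos_vals by simp
lemma t_8_10_2_7: "test pos 8 10 2 7" unfolding test_def cr_def pos_vals by simp
lemma t_8_10_3_4: "test pos 8 10 3 4" unfolding test_def cr_def pos_vals by simp
lemma t_8_10_3_6: "test pos 8 10 3 6" unfolding test_def cr_def pos_vals by simp
lemma t_8_10_4_9: "test pos 8 10 4 9" unfolding test_def cr_def pos_vals by simp
lemma t_8_10_5_8: "test pos 8 10 5 8" unfolding test_def cr_def pos_vals by simp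
lemma t_8_10_6_7: "test pos 8 10 6 7" unfolding test_def cr_def pos_vals by simp

lemmas all_t = t_0_1_0_5 t_0_1_0_9 t_0_1_1_2 t_0_1_1_3 t_0_1_1_10 t_0_1_2_4 t_0_1_2_5 t_0_1_2_7 t_0_1_3_4 t_0_1_3_6 t_0_1_4_9 t_0_1_5_8 t_0_1_6_7 t_0_1_8_10 t_0_5_0_1 t_0_5_0_9 t_0_5_1_2 t_0_5_1_3 t_0_5_1_10 t_0_5_2_4 t_0_5_2_5 t_0_5_2_7 t_0_5_3_4 t_0_5_3_6 t_0_5_4_9 t_0_5_5_8 t_0_5_6_7 t_0_5_8_10 t_0_9_0_1 t_0_9_0_5 t_0_9_1_2 t_0_9_1_3 t_0_9_1_10 t_0_9_2_4 t_0_9_2_5 t_0_9_2_7 t_0_9_3_4 t_0_9_3_6 t_0_9_4_9 t_0_9_5_8 t_0_9_6_7 t_0_9_8_10 t_1_2_0_1 t_1_2_0_5 t_1_2_0_9 t_1_2_1_3 t_1_2_1_10 t_1_2_2_4 t_1_2_2_5 t_1_2_2_7 t_1_2_3_4 t_1_2_3_6 t_1_2_4_9 t_1_2_5_8 t_1_2_6_7 t_1_2_8_10 t_1_3_0_1 t_1_3_0_5 t_1_3_0_9 t_1_3_1_2 t_1_3_1_10 t_1_3_2_4 t_1_3_2_5 t_1_3_2_7 t_1_3_3_4 t_1_3_3_6 t_1_3_4_9 t_1_3_5_8 t_1_3_6_7 t_1_3_8_10 t_1_10_0_1 t_1_10_0_5 t_1_10_0_9 t_1_10_1_2 t_1_10_1_3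 t_1_10_2_4 t_1_10_2_5 t_1_10_2_7 t_1_10_3_4 t_1_10_3_6 t_1_10_4_9 t_1_10_5_8 t_1_10_6_7 t_1_10_8_10 t_2_4_0_1 t_2_4_0_5 t_2_4_0_9 t_2_4_1_2 t_2_4_1_3 t_2_4_1_10 t_2_4_2_5 t_2_4_2_7 t_2_4_3_4 t_2_4_3_6 t_2_4_4_9 t_2_4_5_8 t_2_4_6_7 t_2_4_8_10 t_2_5_0_1 t_2_5_0_5 t_2_5_0_9 t_2_5_1_2 t_2_5_1_3 t_2_5_1_10 t_2_5_2_4 t_2_5_2_7 t_2_5_3_4 t_2_5_3_6 t_2_5_4_9 t_2_5_5_8 t_2_5_6_7 t_2_5_8_10 t_2_7_0_1 t_2_7_0_5 t_2_7_0_9 t_2_7_1_2 t_2_7_1_3 t_2_7_1_10 t_2_7_2_4 t_2_7_2_5 t_2_7_3_4 t_2_7_3_6 t_2_7_4_9 t_2_7_5_8 t_2_7_6_7 t_2_7_8_10 t_3_4_0_1 t_3_4_0_5 t_3_4_0_9 t_3_4_1_2 t_3_4_1_3 t_3_4_1_10 t_3_4_2_4 t_3_4_2_5 t_3_4_2_7 t_3_4_3_6 t_3_4_4_9 t_3_4_5_8 t_3_4_6_7 t_3_4_8_10 t_3_6_0_1 t_3_6_0_5 t_3_6_0_9 t_3_6_1_2 t_3_6_1_3 t_3_6_1_10 t_3_6_2_4 t_3_6_2_5 t_3_6_2_7 t_3_6_3_4 t_3_6_4_9 t_3_6_5_8 t_3_6_6_7 t_3_6_8_10 t_4_9_0_1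 t_4_9_0_5 t_4_9_0_9 t_4_9_1_2 t_4_9_1_3 t_4_9_1_10 t_4_9_2_4 t_4_9_2_5 t_4_9_2_7 t_4_9_3_4 t_4_9_3_6 t_4_9_5_8 t_4_9_6_7 t_4_9_8_10 t_5_8_0_1 t_5_8_0_5 t_5_8_0_9 t_5_8_1_2 t_5_8_1_3 t_5_8_1_10 t_5_8_2_4 t_5_8_2_5 t_5_8_2_7 t_5_8_3_4 t_5_8_3_6 t_5_8_4_9 t_5_8_6_7 t_5_8_8_10 t_6_7_0_1 t_6_7_0_5 t_6_7_0_9 t_6_7_1_2 t_6_7_1_3 t_6_7_1_10 t_6_7_2_4 t_6_7_2_5 t_6_7_2_7 t_6_7_3_4 t_6_7_3_6 t_6_7_4_9 t_6_7_5_8 t_6_7_8_10 t_8_10_0_1 t_8_10_0_5 t_8_10_0_9 t_8_10_1_2 t_8_10_1_3 t_8_10_1_10 t_8_10_2_4 t_8_10_2_5 t_8_10_2_7 t_8_10_3_4 t_8_10_3_6 t_8_10_4_9 t_8_10_5_8 t_8_10_6_7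

lemma all_tests: "\<forall>p\<in>set es. \<forall>q\<in>set es. p \<noteq> q \<longrightarrow> test pos (fst p) (snd p) (fst q) (snd q)"
  unfolding es_def using all_t[simplified] by simp

lemma all_pts: "\<forall>p\<in>set es. \<forall>w\<in>Vg. w \<noteq> fst p \<and> w \<noteq> snd p \<longrightarrow> cr (pos (fst p)) (pos (snd p)) (pos w) \<noteq> 0"
  unfolding es_def Vg_eq cr_def pos_def by simp

lemma pos_inj: "inj_on pos Vg"
  unfolding inj_on_def Vg_eq pos_def by simp

lemma Eg_cases:
  assumes "Eg u v"
  obtains p where "p \<in> set es" "(fst p = u \<and> snd p = v) \<or> (fst p = v \<and> snd p = u)"
  using assms unfolding Eg_def by force

lemma seg_sym_set: "closed_segment (pos u) (pos v) = closed_segment (pos (fst p)) (pos (snd p))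
   \<and> {pos u, pos v} = {pos (fst p), pos (snd p)}"
  if "(fst p = u \<and> snd p = v) \<or> (fst p = v \<and> snd p = u)" for p u v
  using that closed_segment_commute by auto

lemma planar_G: "planar Vg Eg"
  unfolding planar_def
proof (intro exI conjI allI impI)
  show "inj_on pos Vg" by (rule pos_inj)
next
  fix u v assume e: "Eg u v"
  then have "u \<in> Vg" "v \<in> Vg" "u \<noteq> v" using simple unfolding simple_graph_def by blast+
  then have "pos u \<noteq> pos v" using pos_inj by (meson inj_on_contraD)
  then show "arc (linepath (pos u) (pos v))" by (simp add: arc_linepath)
next
  fix u v :: nat show "pathstart (linepath (pos u) (pos v)) = pos u" by simp
next
  fix u v :: nat show "pathfinish (linepath (pos u) (pos v)) = pos v" by simp
next
  fix u v w assume a: "Eg u v \<and> w \<in> Vg \<and> pos w \<in> path_image (linepath (pos u) (pos v))"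
  obtain p where p: "p \<in> set es" "(fst p = u \<and> snd p = v) \<or> (fst p = v \<and> snd p = u)"
    using a Eg_cases by blast
  have "pos w \<in> closed_segment (pos (fst p)) (pos (snd p))"
    using a seg_sym_set[OF p(2)] by simp
  then have "\<not> (w \<noteq> fst p \<and> w \<noteq> snd p)" using all_pts p(1) a pt_off by blast
  then show "w = u \<or> w = v" using p(2) by blast
next
  fix u v x y assume a: "Eg u v \<and> Eg x y \<and> {u, v} \<noteq> {x, y}"
  obtain p where p: "p \<in> set es" "(fst p = u \<and> snd p = v) \<or> (fst p = v \<and> snd p = u)"
    using a Eg_cases by blast
  obtain q where q: "q \<in> set es" "(fst q = x \<and> snd q = y) \<or> (fst q = y \<and> snd q = x)"
    using a Eg_cases by blast
  have "p \<noteq> q" using p(2) q(2) a by (auto simp: prod_eq_iff insert_commute)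
  then have "test pos (fst p) (snd p) (fst q) (snd q)" using all_tests p(1) q(1) by blast
  note t = test_ok[OF this]
  have c1: "closed_segment (pos u) (pos v) = closed_segment (pos (fst p)) (pos (snd p))"
    and s1: "{pos u, pos v} = {pos (fst p), pos (snd p)}" using seg_sym_set[OF p(2)] by auto
  have c2: "closed_segment (pos x) (pos y) = closed_segment (pos (fst q)) (pos (snd q))"
    and s2: "{pos x, pos y} = {pos (fst q), pos (snd q)}" using seg_sym_set[OF q(2)] by auto
  show "path_image (linepath (pos u) (pos v)) \<inter> path_image (linepath (pos x) (pos y))
          \<subseteq> {pos u, pos v} \<inter> {pos x, pos y}"
    unfolding path_image_linepath c1 c2 s1 s2 by (rule t)
qed

definition cyc :: "nat \<Rightarrow> nat" where
  "cyc i = (if i = 0 then 1 else if i = 1 then 2 else if i = 2 then 4 else 3)"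

lemma lt4: "(i::nat) < 4 \<Longrightarrow> i = 0 \<or> i = 1 \<or> i = 2 \<or> i = 3" by arith

lemma girth_G: "girth_is Vg Eg 4"
  unfolding girth_is_def
proof (intro conjI allI impI)
  show "has_cycle_len Vg Eg 4"
    unfolding has_cycle_len_def
  proof (intro conjI exI[of _ cyc] allI impI)
    fix i :: nat assume "i < 4"
    then show "cyc i \<in> Vg" using lt4 by (auto simp: cyc_def Vg_def)
  next
    show "inj_on cyc {..<4}"
      unfolding inj_on_def using lt4 by (auto simp: cyc_def)
  next
    fix i :: nat assume "i < 4"
    then show "Eg (cyc i) (cyc ((i + 1) mod 4))" using lt4[of i]
      by (auto simp: cyc_def Eg_def es_def)
  qed simp
next
  fix k :: nat assume k: "k < 4"
  show "\<not> has_cycle_len Vg Eg k"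
  proof
    assume h: "has_cycle_len Vg Eg k"
    then have "k = 3" using k unfolding has_cycle_len_def by simp
    obtain f where ff: "\<forall>i<(3::nat). Eg (f i) (f ((i + 1) mod 3))" using h unfolding has_cycle_len_def \<open>k = 3\<close> by blast
    have "Eg (f 0) (f 1)" "Eg (f 1) (f 2)" "Eg (f 2) (f 0)"
      using spec[OF ff, of 0] spec[OF ff, of 1] spec[OF ff, of 2] by (simp_all add: numeral_2_eq_2)
    then show False using tri_free by blast
  qed
qed

lemma cbox_upd:
  assumes "z \<in> cbox_d d lo hi" "0 < d" "lo 0 \<le> t" "t \<le> hi 0"
  shows "z(0 := t) \<in> cbox_d d lo hi"
  using assms unfolding cbox_d_def by auto

lemma edge_level:
  assumes d: "1 \<le> d" and l1: "\<forall>i<d. lo1 i < hi1 i" and l2: "\<forall>i<d. lo2 i < hi2 i"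
    and ne: "cbox_d d lo1 hi1 \<inter> cbox_d d lo2 hi2 \<noteq> {}"
    and fb: "facet_box_e1 d (cbox_d d lo1 hi1 \<inter> cbox_d d lo2 hi2)"
  shows "hi1 0 = lo2 0 \<or> hi2 0 = lo1 0"
proof -
  obtain z where z1: "z \<in> cbox_d d lo1 hi1" and z2: "z \<in> cbox_d d lo2 hi2" using ne by blast
  obtain a b where ab: "a 0 = b 0" and S: "cbox_d d lo1 hi1 \<inter> cbox_d d lo2 hi2 = cbox_d d a b"
    using fb unfolding facet_box_e1_def by blast
  have d0: "0 < d" using d by simp
  have pt: "y 0 = a 0" if "y \<in> cbox_d d lo1 hi1" "y \<in> cbox_d d lo2 hi2" for y
  proof -
    have "y \<in> cbox_d d a b" using that S by blast
    then have "a 0 \<le> y 0 \<and> y 0 \<le> b 0" using d0 unfolding cbox_d_def by blast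
    then show ?thesis using ab by linarith
  qed
  have zb1: "lo1 0 \<le> z 0" "z 0 \<le> hi1 0" using z1 d0 unfolding cbox_d_def by blast+
  have zb2: "lo2 0 \<le> z 0" "z 0 \<le> hi2 0" using z2 d0 unfolding cbox_d_def by blast+
  have inm: "t = a 0" if "lo1 0 \<le> t" "t \<le> hi1 0" "lo2 0 \<le> t" "t \<le> hi2 0" for t
    using pt[OF cbox_upd[OF z1 d0] cbox_upd[OF z2 d0]] that by simp
  have lo: "lo1 0 < hi1 0" "lo2 0 < hi2 0" using l1 l2 d0 by auto
  have c1: "max (lo1 0) (lo2 0) = a 0"
    using inm[of "max (lo1 0) (lo2 0)"] zb1 zb2 by simp
  have c2: "min (hi1 0) (hi2 0) = a 0"
    using inm[of "min (hi1 0) (hi2 0)"] zb1 zb2 by simp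
  show ?thesis using c1 c2 lo unfolding max_def min_def by (auto split: if_splits)
qed

lemma not_CBU: "\<not> CBU Vg Eg"
proof
  assume "CBU Vg Eg"
  then obtain d where d: "1 \<le> d" and dc: "d_CBU d Vg Eg" unfolding CBU_def by blast
  from dc obtain lo hi where P:
    "(\<forall>v\<in>Vg. \<forall>i<d. lo v i < hi v i)
     \<and> (\<forall>u\<in>Vg. \<forall>v\<in>Vg. u \<noteq> v \<longrightarrow> obox_d d (lo u) (hi u) \<inter> obox_d d (lo v) (hi v) = {})
     \<and> (\<forall>u\<in>Vg. \<forall>v\<in>Vg. u \<noteq> v \<longrightarrow> (Eg u v \<longleftrightarrow> cbox_d d (lo u) (hi u) \<inter> cbox_d d (lo v) (hi v) \<noteq> {}))
     \<and> (\<forall>u\<in>Vg. \<forall>v\<in>Vg. u \<noteq> v \<and> cbox_d d (lo u) (hi u) \<inter> cbox_d d (lo v) (hi v) \<noteq> {} \<longrightarrow>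
          facet_box_e1 d (cbox_d d (lo u) (hi u) \<inter> cbox_d d (lo v) (hi v)))"
    unfolding d_CBU_def by (elim exE) (rule that)
  have lh: "\<forall>v\<in>Vg. \<forall>i<d. lo v i < hi v i" using P by (rule conjunct1)
  have adj: "\<forall>u\<in>Vg. \<forall>v\<in>Vg. u \<noteq> v \<longrightarrow> (Eg u v \<longleftrightarrow> cbox_d d (lo u) (hi u) \<inter> cbox_d d (lo v) (hi v) \<noteq> {})"
    using P by (elim conjE)
  have fc: "\<forall>u\<in>Vg. \<forall>v\<in>Vg. u \<noteq> v \<and> cbox_d d (lo u) (hi u) \<inter> cbox_d d (lo v) (hi v) \<noteq> {} \<longrightarrow>
          facet_box_e1 d (cbox_d d (lo u) (hi u) \<inter> cbox_d d (lo v) (hi v))"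
    using P by (elim conjE)
  define L where "L v = lo v 0" for v
  define H where "H v = hi v 0" for v
  have LH: "L v < H v" if "v \<in> Vg" for v
    using lh that d unfolding L_def H_def by auto
  have ed: "H u = L v \<or> H v = L u" if "(u,v) \<in> set es" for u v
  proof -
    have uv: "u \<in> Vg" "v \<in> Vg" "u \<noteq> v" using es_in_Vg[OF that] by auto
    have e: "Eg u v" using that unfolding Eg_def by simp
    have ne: "cbox_d d (lo u) (hi u) \<inter> cbox_d d (lo v) (hi v) \<noteq> {}" using adj uv e by blast
    have f: "facet_box_e1 d (cbox_d d (lo u) (hi u) \<inter> cbox_d d (lo v) (hi v))" using fc uv ne by blast
    have l1: "\<forall>i<d. lo u i < hi u i" and l2: "\<forall>i<d. lo v i < hi v i" using lh uv by blast+
    show ?thesis using edge_level[OF d l1 l2 ne f] unfolding L_def H_def .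
  qed
  have v0: "L 0 < H 0" by (rule LH) (simp add: Vg_def)
  have v1: "L 1 < H 1" by (rule LH) (simp add: Vg_def)
  have v2: "L 2 < H 2" by (rule LH) (simp add: Vg_def)
  have v3: "L 3 < H 3" by (rule LH) (simp add: Vg_def)
  have v4: "L 4 < H 4" by (rule LH) (simp add: Vg_def)
  have v5: "L 5 < H 5" by (rule LH) (simp add: Vg_def)
  have v6: "L 6 < H 6" by (rule LH) (simp add: Vg_def)
  have v7: "L 7 < H 7" by (rule LH) (simp add: Vg_def)
  have v8: "L 8 < H 8" by (rule LH) (simp add: Vg_def)
  have v9: "L 9 < H 9" by (rule LH) (simp add: Vg_def)
  have v10: "L 10 < H 10" by (rule LH) (simp add: Vg_def)
  have e0: "H 0 = L 1 \<or> H 1 = L 0" by (rule ed) (simp add: es_def)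
  have e1: "H 0 = L 5 \<or> H 5 = L 0" by (rule ed) (simp add: es_def)
  have e2: "H 0 = L 9 \<or> H 9 = L 0" by (rule ed) (simp add: es_def)
  have e3: "H 1 = L 2 \<or> H 2 = L 1" by (rule ed) (simp add: es_def)
  have e4: "H 1 = L 3 \<or> H 3 = L 1" by (rule ed) (simp add: es_def)
  have e5: "H 1 = L 10 \<or> H 10 = L 1" by (rule ed) (simp add: es_def)
  have e6: "H 2 = L 4 \<or> H 4 = L 2" by (rule ed) (simp add: es_def)
  have e7: "H 2 = L 5 \<or> H 5 = L 2" by (rule ed) (simp add: es_def)
  have e8: "H 2 = L 7 \<or> H 7 = L 2" by (rule ed) (simp add: es_def)
  have e9: "H 3 = L 4 \<or> H 4 = L 3" by (rule ed) (simp add: es_def)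
  have e10: "H 3 = L 6 \<or> H 6 = L 3" by (rule ed) (simp add: es_def)
  have e11: "H 4 = L 9 \<or> H 9 = L 4" by (rule ed) (simp add: es_def)
  have e12: "H 5 = L 8 \<or> H 8 = L 5" by (rule ed) (simp add: es_def)
  have e13: "H 6 = L 7 \<or> H 7 = L 6" by (rule ed) (simp add: es_def)
  have e14: "H 8 = L 10 \<or> H 10 = L 8" by (rule ed) (simp add: es_def)
  show False by (rule comb[OF v0 v1 v2 v3 v4 v5 v6 v7 v8 v9 v10 e0 e1 e2 e3 e4 e5 e6 e7 e8 e9 e10 e11 e12 e13 e14])
qed

theorem mainTheorem6:
  shows "\<exists>(V :: nat set) E. simple_graph V E \<and> planar V E \<and> girth_is V E 4 \<and> \<not> CBU V E"
  using simple planar_G girth_G not_CBU by blast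

end
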